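(* Let $D=\mathrm{diag}(d_1,\dots,d_n)$ be real diagonal, $\beta_1,\beta_2\neq0$ real, $\mathbf v_1,\mathbf v_2\in\mathbb R^n$ with entries $v_{1q},v_{2q}$, and $M=D+\beta_1\mathbf v_1\mathbf v_1^T+\beta_2\mathbf v_2\mathbf v_2^T$. Fix an index $i$ such that $d_j\neq d_i$ for all $j\neq i$, and suppose $v_{1i}=0$ and $v_{2i}\neq0$. Define $f_{11}(\lambda)=1-\beta_1\sum_{q\neq i}\frac{v_{1q}^2}{\lambda-d_q}$. Then $d_i$ is an eigenvalue of $M$ if and only if $f_{11}(d_i)=0$; in that case the eigenspace is spanned by the vector $\mathbf x$ with $x_q=\frac{v_{1q}}{d_q-d_i}$ for $q\neq i$ and $x_i$ determined by $\mathbf v_2^T\mathbf x=0$, i.e. $x_i=-\frac1{v_{2i}}\sum_{q\ne i}v_{2q}x_q$. Symmetrically, if $v_{1i}\neq0$ and $v_{2i}=0$, then $d_i$ is an eigenvalue of $M$ iff $f_{12}(d_i)=0$, where $f_{12}(\lambda)=1-\beta_2\sum_{q\neq i}\frac{v_{2q}^2}{\lambda-d_q}$. *)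

theory Defs
  imports "HOL-Analysis.Analysis"
begin

definition diag_mat :: "('n::finite \<Rightarrow> real) \<Rightarrow> real^'n^'n" where
  "diag_mat d = (\<chi> p q. if p = q then d p else 0)"

definition outer :: "real^'n::finite \<Rightarrow> real^'n^'n" where
  "outer v = (\<chi> p q. v $ p * v $ q)"

definition is_eigenvalue :: "real^'n::finite^'n \<Rightarrow> real \<Rightarrow> bool" where
  "is_eigenvalue M l \<longleftrightarrow> (\<exists>x. x \<noteq> 0 \<and> M *v x = l *s x)"

definition eigenspace :: "real^'n::finite^'n \<Rightarrow> real \<Rightarrow> (real^'n) set" where
  "eigenspace M l = {x. M *v x = l *s x}"

end

theory Submission
  imports Defs
begin

lemma Mv_comp:
  fixes d :: "'n::finite \<Rightarrow> real"
  shows "((diag_mat d + b *\<^sub>R outer u + c *\<^sub>R outer w) *v x) $ p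
     = d p * x $ p + b * u $ p * (u \<bullet> x) + c * w $ p * (w \<bullet> x)"
proof -
  have "((diag_mat d + b *\<^sub>R outer u + c *\<^sub>R outer w) *v x) $ p
     = (\<Sum>j\<in>UNIV. (if p = j then d p else 0) * x $ j) + (\<Sum>j\<in>UNIV. b * (u$p * u$j) * x$j)
       + (\<Sum>j\<in>UNIV. c * (w$p * w$j) * x$j)"
    by (simp add: matrix_vector_mult_def diag_mat_def outer_def distrib_right sum.distrib)
  moreover have "(\<Sum>j\<in>UNIV. (if p = j then d p else 0) * x $ j) = d p * x $ p"
    by (simp add: if_distrib[where f="\<lambda>a. a * _"] cong: if_cong)
  moreover have "(\<Sum>j\<in>UNIV. b * (u$p * u$j) * x$j) = b * u $ p * (u \<bullet> x)"
    by (simp add: inner_vec_def sum_distrib_left mult.assoc)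
  moreover have "(\<Sum>j\<in>UNIV. c * (w$p * w$j) * x$j) = c * w $ p * (w \<bullet> x)"
    by (simp add: inner_vec_def sum_distrib_left mult.assoc)
  ultimately show ?thesis by simp
qed

lemma inner_split:
  fixes u x :: "real^'n::finite"
  shows "u \<bullet> x = u$i * x$i + (\<Sum>q\<in>UNIV-{i}. u$q * x$q)"
  unfolding inner_vec_def by (simp add: sum.remove[of UNIV i])

lemma generic:
  fixes d :: "'n::finite \<Rightarrow> real" and b c :: real and u w :: "real^'n"
  assumes c: "c \<noteq> 0" and wi: "w $ i \<noteq> 0" and ui: "u $ i = 0"
    and dist: "\<And>j. j \<noteq> i \<Longrightarrow> d j \<noteq> d i"
  defines "N \<equiv> diag_mat d + b *\<^sub>R outer u + c *\<^sub>R outer w"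
    and "f \<equiv> 1 - b * (\<Sum>q\<in>UNIV - {i}. (u $ q)^2 / (d i - d q))"
  shows "(is_eigenvalue N (d i) \<longleftrightarrow> f = 0) \<and>
        (f = 0 \<longrightarrow>
           (let y = (\<lambda>q. u $ q / (d q - d i));
                x = (\<chi> q. if q = i
                           then - (1 / w $ i) * (\<Sum>p\<in>UNIV - {i}. w $ p * y p)
                           else y q)
            in eigenspace N (d i) = span {x}))"
proof -
  have eig_iff: "N *v x = d i *s x \<longleftrightarrow>
      (w \<bullet> x = 0 \<and> (\<forall>p. p \<noteq> i \<longrightarrow> x$p = - b * (u \<bullet> x) * (u$p / (d p - d i))))" for x
  proof
    assume e: "N *v x = d i *s x"
    have ep: "d p * x $ p + b * u $ p * (u \<bullet> x) + c * w $ p * (w \<bullet> x) = d i * x $ p" for p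
      using e unfolding N_def by (metis Mv_comp vector_smult_component)
    from ep[of i] ui have "c * w $ i * (w \<bullet> x) = 0" by simp
    with c wi have w0: "w \<bullet> x = 0" by simp
    moreover have "x$p = - b * (u \<bullet> x) * (u$p / (d p - d i))" if "p \<noteq> i" for p
    proof -
      have "d p - d i \<noteq> 0" using dist[OF that] by simp
      moreover have "(d p - d i) * x $ p = - b * u $ p * (u \<bullet> x)" using ep[of p] w0
        by (simp add: algebra_simps)
      ultimately show ?thesis by (simp add: field_simps)
    qed
    ultimately show "w \<bullet> x = 0 \<and> (\<forall>p. p \<noteq> i \<longrightarrow> x$p = - b * (u \<bullet> x) * (u$p / (d p - d i)))"
      by blast
  next
    assume h: "w \<bullet> x = 0 \<and> (\<forall>p. p \<noteq> i \<longrightarrow> x$p = - b * (u \<bullet> x) * (u$p / (d p - d i)))"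
    show "N *v x = d i *s x"
    proof (subst vec_eq_iff, intro allI)
      fix p
      show "(N *v x) $ p = (d i *s x) $ p"
      proof (cases "p = i")
        case True thus ?thesis using h ui unfolding N_def by (simp add: Mv_comp)
      next
        case False
        have "d p - d i \<noteq> 0" using dist[OF False] by simp
        with h False have "(d p - d i) * x $ p = - b * u $ p * (u \<bullet> x)"
          by (simp add: field_simps)
        thus ?thesis using h unfolding N_def by (simp only: Mv_comp vector_smult_component) (simp add: algebra_simps)
      qed
    qed
  qed
  let ?S = "\<Sum>q\<in>UNIV - {i}. (u $ q)^2 / (d i - d q)"
  have sf: "(u \<bullet> x) * f = 0" if "N *v x = d i *s x" for x
  proof -
    from that eig_iff have h: "\<forall>p. p \<noteq> i \<longrightarrow> x$p = - b * (u \<bullet> x) * (u$p / (d p - d i))" by blast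
    have "u \<bullet> x = (\<Sum>q\<in>UNIV-{i}. u$q * x$q)" using inner_split[of u x i] ui by simp
    also have "\<dots> = (\<Sum>q\<in>UNIV-{i}. b * (u \<bullet> x) * ((u $ q)^2 / (d i - d q)))"
    proof (rule sum.cong)
      fix q assume "q \<in> UNIV - {i}"
      hence q: "q \<noteq> i" by simp
      have "d i - d q \<noteq> 0" "d q - d i \<noteq> 0" using dist[OF q] by auto
      thus "u$q * x$q = b * (u \<bullet> x) * ((u $ q)^2 / (d i - d q))"
        using h q by (simp add: field_simps power2_eq_square)
    qed simp
    also have "\<dots> = b * (u \<bullet> x) * ?S" by (simp add: sum_distrib_left)
    finally show ?thesis unfolding f_def by (simp add: algebra_simps)
  qed
  have zero: "x = 0" if "N *v x = d i *s x" "u \<bullet> x = 0" for x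
  proof -
    from that(1) eig_iff have h: "w \<bullet> x = 0" "\<forall>p. p \<noteq> i \<longrightarrow> x$p = - b * (u \<bullet> x) * (u$p / (d p - d i))" by blast+
    hence xp: "\<forall>p. p \<noteq> i \<longrightarrow> x$p = 0" using that(2) by simp
    have "w \<bullet> x = w$i * x$i + (\<Sum>q\<in>UNIV-{i}. w$q * x$q)" by (rule inner_split)
    also have "(\<Sum>q\<in>UNIV-{i}. w$q * x$q) = 0" using xp by (intro sum.neutral) auto
    finally have "x$i = 0" using h wi by simp
    with xp show ?thesis by (metis vec_eq_iff zero_index)
  qed
  define y where "y = (\<lambda>q. u $ q / (d q - d i))"
  define xv where "xv = (\<chi> q. if q = i then - (1 / w $ i) * (\<Sum>p\<in>UNIV - {i}. w $ p * y p) else y q)"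
  have xv_eig: "N *v xv = d i *s xv \<and> u \<bullet> xv = - 1 / b" if f0: "f = 0"
  proof -
    have b: "b \<noteq> 0" using f0 unfolding f_def by auto
    have bS: "b * ?S = 1" using f0 unfolding f_def by simp
    have "u \<bullet> xv = (\<Sum>q\<in>UNIV-{i}. u$q * xv$q)" using inner_split[of u xv i] ui by simp
    also have "\<dots> = (\<Sum>q\<in>UNIV-{i}. - ((u $ q)^2 / (d i - d q)))"
    proof (rule sum.cong)
      fix q assume "q \<in> UNIV - {i}"
      hence q: "q \<noteq> i" by simp
      have "d i - d q \<noteq> 0" "d q - d i \<noteq> 0" using dist[OF q] by auto
      thus "u$q * xv$q = - ((u $ q)^2 / (d i - d q))"
        using q by (simp add: xv_def y_def field_simps power2_eq_square)
    qed simp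
    also have "\<dots> = - ?S" by (simp add: sum_negf)
    also have "\<dots> = - 1 / b" using bS b by (simp add: field_simps)
    finally have ux: "u \<bullet> xv = - 1 / b" .
    have "w \<bullet> xv = w$i * xv$i + (\<Sum>q\<in>UNIV-{i}. w$q * xv$q)" by (rule inner_split)
    also have "(\<Sum>q\<in>UNIV-{i}. w$q * xv$q) = (\<Sum>q\<in>UNIV-{i}. w$q * y q)"
      by (rule sum.cong) (auto simp: xv_def)
    finally have wx: "w \<bullet> xv = 0" using wi by (simp add: xv_def)
    have "\<forall>p. p \<noteq> i \<longrightarrow> xv$p = - b * (u \<bullet> xv) * (u$p / (d p - d i))"
      using ux b by (simp add: xv_def y_def)
    with wx eig_iff ux show ?thesis by blast
  qed
  have part1: "is_eigenvalue N (d i) \<longleftrightarrow> f = 0"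
  proof
    assume "is_eigenvalue N (d i)"
    then obtain x where x: "x \<noteq> 0" "N *v x = d i *s x" unfolding is_eigenvalue_def by blast
    have "u \<bullet> x \<noteq> 0" using zero x by blast
    with sf[OF x(2)] show "f = 0" by simp
  next
    assume f0: "f = 0"
    have b: "b \<noteq> 0" using f0 unfolding f_def by auto
    from xv_eig[OF f0] b have "xv \<noteq> 0" by auto
    with xv_eig[OF f0] show "is_eigenvalue N (d i)" unfolding is_eigenvalue_def by blast
  qed
  have part2: "eigenspace N (d i) = span {xv}" if f0: "f = 0"
  proof
    have b: "b \<noteq> 0" using f0 unfolding f_def by auto
    show "eigenspace N (d i) \<subseteq> span {xv}"
    proof
      fix x assume "x \<in> eigenspace N (d i)"
      hence e: "N *v x = d i *s x" by (simp add: eigenspace_def)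
      from e eig_iff have h: "w \<bullet> x = 0" "\<forall>p. p \<noteq> i \<longrightarrow> x$p = - b * (u \<bullet> x) * (u$p / (d p - d i))" by blast+
      define k where "k = - b * (u \<bullet> x)"
      have xp: "x$p = k * y p" if "p \<noteq> i" for p using h that by (simp add: k_def y_def)
      have "w \<bullet> x = w$i * x$i + (\<Sum>q\<in>UNIV-{i}. w$q * x$q)" by (rule inner_split)
      also have "(\<Sum>q\<in>UNIV-{i}. w$q * x$q) = k * (\<Sum>q\<in>UNIV-{i}. w$q * y q)"
        by (simp add: sum_distrib_left) (rule sum.cong, auto simp: xp)
      finally have "x$i = k * xv$i" using h wi by (simp add: xv_def field_simps)
      hence "x = k *\<^sub>R xv" using xp by (simp add: vec_eq_iff xv_def)
      thus "x \<in> span {xv}" by (auto simp add: span_singleton)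
    qed
    show "span {xv} \<subseteq> eigenspace N (d i)"
    proof
      fix x assume "x \<in> span {xv}"
      then obtain k where xk: "x = k *\<^sub>R xv" by (auto simp: span_singleton)
      have "N *v x = k *\<^sub>R (N *v xv)" unfolding xk by (rule matrix_vector_mult_scaleR)
      thus "x \<in> eigenspace N (d i)" using xv_eig[OF f0]
        unfolding eigenspace_def by (simp add: xk vec_eq_iff)
    qed
  qed
  show ?thesis using part1 part2 unfolding Let_def y_def[symmetric] xv_def[symmetric] by blast
qed

theorem mainTheorem3:
  fixes d :: "'n::finite \<Rightarrow> real"
    and b1 b2 :: real
    and v1 v2 :: "real^'n"
    and i :: 'n
  assumes "b1 \<noteq> 0" and "b2 \<noteq> 0"
    and "\<And>j. j \<noteq> i \<Longrightarrow> d j \<noteq> d i"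
  defines "M \<equiv> diag_mat d + b1 *\<^sub>R outer v1 + b2 *\<^sub>R outer v2"
    and "f11 \<equiv> (\<lambda>l. 1 - b1 * (\<Sum>q\<in>UNIV - {i}. (v1 $ q)^2 / (l - d q)))"
    and "f12 \<equiv> (\<lambda>l. 1 - b2 * (\<Sum>q\<in>UNIV - {i}. (v2 $ q)^2 / (l - d q)))"
  shows
    "(v1 $ i = 0 \<and> v2 $ i \<noteq> 0 \<longrightarrow>
        (is_eigenvalue M (d i) \<longleftrightarrow> f11 (d i) = 0) \<and>
        (f11 (d i) = 0 \<longrightarrow>
           (let y = (\<lambda>q. v1 $ q / (d q - d i));
                x = (\<chi> q. if q = i
                           then - (1 / v2 $ i) * (\<Sum>p\<in>UNIV - {i}. v2 $ p * y p)
                           else y q)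
            in eigenspace M (d i) = span {x})))
     \<and>
     (v1 $ i \<noteq> 0 \<and> v2 $ i = 0 \<longrightarrow>
        (is_eigenvalue M (d i) \<longleftrightarrow> f12 (d i) = 0))"
proof (intro conjI impI)
  assume h: "v1 $ i = 0 \<and> v2 $ i \<noteq> 0"
  note g = generic[of b2 v2 i v1 d b1, OF assms(2) conjunct2[OF h] conjunct1[OF h] assms(3)]
  show "is_eigenvalue M (d i) = (f11 (d i) = 0)" using g unfolding M_def f11_def by simp
  show "f11 (d i) = 0 \<Longrightarrow> (let y = (\<lambda>q. v1 $ q / (d q - d i));
                x = (\<chi> q. if q = i
                           then - (1 / v2 $ i) * (\<Sum>p\<in>UNIV - {i}. v2 $ p * y p)
                           else y q)
            in eigenspace M (d i) = span {x})" using g unfolding M_def f11_def by simp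
next
  assume h: "v1 $ i \<noteq> 0 \<and> v2 $ i = 0"
  note g = generic[of b1 v1 i v2 d b2, OF assms(1) conjunct1[OF h] conjunct2[OF h] assms(3)]
  have "M = diag_mat d + b2 *\<^sub>R outer v2 + b1 *\<^sub>R outer v1" unfolding M_def by (simp add: add_ac)
  thus "is_eigenvalue M (d i) = (f12 (d i) = 0)" using g unfolding f12_def by simp
qed

end
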